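(* Let $D$ be a division algebra, $\sigma\in\mathrm{Aut}(D)$, and suppose $F=\mathcal{Z}(D)\cap D_\sigma$ is infinite. Let $f\in D[t_1,\ldots,t_d;\sigma]$ be a nonzero skew polynomial. Then there exist $a\in D$ and $a_1,\ldots,a_{d-1}\in F$ such that the polynomial $g=a\cdot f(t_1+a_1t_d,\ldots,t_{d-1}+a_{d-1}t_d,t_d)$ is a monic polynomial in $t_d$ with coefficients in $D[t_1,\ldots,t_{d-1};\sigma]$.
   Context: $\mathcal{Z}(D)$ is the center of $D$ and $D_\sigma=\{r\in D:\sigma(r)=r\}$. $D[t_1,\ldots,t_d;\sigma]$ denotes the skew polynomial ring in pairwise commuting variables with $t_ir=\sigma(r)t_i$ for all $r\in D$ and all $i$; it is identified with $D[t_1,\ldots,t_{d-1};\sigma][t_d;\sigma]$, where $\sigma$ is extended by $\sigma(t_i)=t_i$. For $a_1,\ldots,a_{d-1}\in F$, $f(t_1+a_1t_d,\ldots,t_{d-1}+a_{d-1}t_d,t_d)$ denotes the image of $f$ under the unique ring endomorphism of $D[t_1,\ldots,t_d;\sigma]$ fixing $D$ pointwise and sending $t_i\mapsto t_i+a_it_d$ for $i<d$ and $t_d\mapsto t_d$. Monic in $t_d$ means that, written as $\sum_j c_jt_d^j$ with $c_j\in D[t_1,\ldots,t_{d-1};\sigma]$, its leading coefficient is $1$. *)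

theory Defs
  imports Main
begin

text \<open>Skew polynomials in d pairwise commuting variables t_0,...,t_{d-1} over a division
ring 'a, with t_i r = sigma(r) t_i.  A skew polynomial is represented by its coefficient
function: monomials are exponent vectors alpha :: nat => nat (with alpha i = 0 for i >= d),
and p alpha is the (left) coefficient c in c t^alpha.  The paper's variable t_k is our
index k-1; in particular t_d is index d-1.\<close>

definition skpolys :: "nat \<Rightarrow> ((nat \<Rightarrow> nat) \<Rightarrow> 'a::zero) set" where
  "skpolys d = {p. finite {\<alpha>. p \<alpha> \<noteq> 0} \<and> (\<forall>\<alpha>. p \<alpha> \<noteq> 0 \<longrightarrow> (\<forall>i\<ge>d. \<alpha> i = 0))}"

definition skp_zero :: "(nat \<Rightarrow> nat) \<Rightarrow> 'a::zero" where
  "skp_zero = (\<lambda>_. 0)"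

definition skp_const :: "'a::zero \<Rightarrow> (nat \<Rightarrow> nat) \<Rightarrow> 'a" where
  "skp_const r = (\<lambda>\<alpha>. if \<alpha> = (\<lambda>_. 0) then r else 0)"

definition skp_var :: "nat \<Rightarrow> (nat \<Rightarrow> nat) \<Rightarrow> 'a::{zero,one}" where
  "skp_var i = (\<lambda>\<alpha>. if \<alpha> = (\<lambda>j. if j = i then 1 else 0) then 1 else 0)"

definition skp_add :: "((nat \<Rightarrow> nat) \<Rightarrow> 'a::plus) \<Rightarrow> ((nat \<Rightarrow> nat) \<Rightarrow> 'a) \<Rightarrow> (nat \<Rightarrow> nat) \<Rightarrow> 'a" where
  "skp_add p q = (\<lambda>\<alpha>. p \<alpha> + q \<alpha>)"

definition mdeg :: "nat \<Rightarrow> (nat \<Rightarrow> nat) \<Rightarrow> nat" where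
  "mdeg d \<alpha> = (\<Sum>i<d. \<alpha> i)"

text \<open>(c t^alpha)(e t^beta) = c sigma^{|alpha|}(e) t^{alpha+beta}\<close>
definition skp_mult :: "('a::ring_1 \<Rightarrow> 'a) \<Rightarrow> nat \<Rightarrow> ((nat \<Rightarrow> nat) \<Rightarrow> 'a) \<Rightarrow> ((nat \<Rightarrow> nat) \<Rightarrow> 'a) \<Rightarrow> (nat \<Rightarrow> nat) \<Rightarrow> 'a" where
  "skp_mult \<sigma> d p q = (\<lambda>\<gamma>. \<Sum>\<alpha>\<in>{\<alpha>. p \<alpha> \<noteq> 0 \<and> (\<forall>i. \<alpha> i \<le> \<gamma> i)}.
      p \<alpha> * (\<sigma> ^^ mdeg d \<alpha>) (q (\<lambda>i. \<gamma> i - \<alpha> i)))"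

definition ring_aut :: "('a::ring_1 \<Rightarrow> 'a) \<Rightarrow> bool" where
  "ring_aut \<sigma> \<longleftrightarrow> bij \<sigma> \<and> (\<forall>x y. \<sigma> (x + y) = \<sigma> x + \<sigma> y) \<and> (\<forall>x y. \<sigma> (x * y) = \<sigma> x * \<sigma> y)
     \<and> \<sigma> 1 = 1"

definition centre_fixed :: "('a::ring_1 \<Rightarrow> 'a) \<Rightarrow> 'a set" where
  "centre_fixed \<sigma> = {x. (\<forall>y. x * y = y * x)} \<inter> {x. \<sigma> x = x}"

text \<open>phi is a ring endomorphism of D[t_1..t_d;sigma] fixing D pointwise and sending
t_i to t_i + a_i t_d (i < d) and t_d to t_d.  (Such phi is unique when it exists.)\<close>
definition skp_subst_hom :: "('a::ring_1 \<Rightarrow> 'a) \<Rightarrow> nat \<Rightarrow> (nat \<Rightarrow> 'a)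
    \<Rightarrow> (((nat \<Rightarrow> nat) \<Rightarrow> 'a) \<Rightarrow> ((nat \<Rightarrow> nat) \<Rightarrow> 'a)) \<Rightarrow> bool" where
  "skp_subst_hom \<sigma> d as \<phi> \<longleftrightarrow>
     (\<forall>p\<in>skpolys d. \<phi> p \<in> skpolys d)
   \<and> (\<forall>p\<in>skpolys d. \<forall>q\<in>skpolys d. \<phi> (skp_add p q) = skp_add (\<phi> p) (\<phi> q))
   \<and> (\<forall>p\<in>skpolys d. \<forall>q\<in>skpolys d. \<phi> (skp_mult \<sigma> d p q) = skp_mult \<sigma> d (\<phi> p) (\<phi> q))
   \<and> (\<forall>r. \<phi> (skp_const r) = skp_const r)
   \<and> (\<forall>i<d - 1. \<phi> (skp_var i) = skp_add (skp_var i) (skp_mult \<sigma> d (skp_const (as i)) (skp_var (d - 1))))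
   \<and> \<phi> (skp_var (d - 1)) = skp_var (d - 1)"

definition deg_in :: "((nat \<Rightarrow> nat) \<Rightarrow> 'a::zero) \<Rightarrow> nat \<Rightarrow> nat" where
  "deg_in p i = Max {\<alpha> i | \<alpha>. p \<alpha> \<noteq> 0}"

text \<open>p = sum_j c_j t_d^j with c_j in D[t_1..t_{d-1};sigma] and leading coefficient c_n = 1\<close>
definition monic_in_last :: "nat \<Rightarrow> ((nat \<Rightarrow> nat) \<Rightarrow> 'a::{zero,one}) \<Rightarrow> bool" where
  "monic_in_last d p \<longleftrightarrow> p \<noteq> skp_zero \<and>
     (\<forall>\<alpha>. \<alpha> (d - 1) = deg_in p (d - 1) \<longrightarrow>
        p \<alpha> = (if (\<forall>j. j \<noteq> d - 1 \<longrightarrow> \<alpha> j = 0) then 1 else 0))"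

end

theory Submission
  imports Defs "HOL-Library.Function_Algebras"
begin


lemma sum_fun_app: "(\<Sum>x\<in>A. f x) y = (\<Sum>x\<in>A. f x y)"
  by (induction A rule: infinite_finite_induct) auto

definition supp :: "((nat \<Rightarrow> nat) \<Rightarrow> 'a::zero) \<Rightarrow> (nat \<Rightarrow> nat) set" where
  "supp p = {\<alpha>. p \<alpha> \<noteq> 0}"

definition mnm :: "'a::zero \<Rightarrow> (nat \<Rightarrow> nat) \<Rightarrow> (nat \<Rightarrow> nat) \<Rightarrow> 'a" where
  "mnm c \<alpha> = (\<lambda>\<gamma>. if \<gamma> = \<alpha> then c else 0)"

definition fsupp :: "((nat \<Rightarrow> nat) \<Rightarrow> 'a::zero) \<Rightarrow> bool" where
  "fsupp p \<longleftrightarrow> finite (supp p)"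

definition lin :: "('a::zero \<Rightarrow> (nat \<Rightarrow> nat) \<Rightarrow> 'b::comm_monoid_add) \<Rightarrow> ((nat \<Rightarrow> nat) \<Rightarrow> 'a) \<Rightarrow> 'b" where
  "lin G p = (\<Sum>\<alpha>\<in>supp p. G (p \<alpha>) \<alpha>)"

lemma supp_add: "supp (p + q) \<subseteq> supp p \<union> supp (q :: (nat \<Rightarrow> nat) \<Rightarrow> 'a::monoid_add)"
  by (auto simp: supp_def)

lemma fsupp_add: "fsupp p \<Longrightarrow> fsupp q \<Longrightarrow> fsupp (p + (q :: (nat \<Rightarrow> nat) \<Rightarrow> 'a::monoid_add))"
  unfolding fsupp_def using supp_add finite_subset by blast

lemma fsupp_zero[simp]: "fsupp 0"
  by (simp add: fsupp_def supp_def)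

lemma fsupp_sum: "(\<And>x. x \<in> A \<Longrightarrow> fsupp (h x)) \<Longrightarrow> fsupp (\<Sum>x\<in>A. h x :: (nat \<Rightarrow> nat) \<Rightarrow> 'a::comm_monoid_add)"
  by (induction A rule: infinite_finite_induct) (auto intro: fsupp_add)

lemma supp_mnm: "supp (mnm c \<alpha>) = (if c = 0 then {} else {\<alpha>})"
  by (auto simp: supp_def mnm_def)

lemma fsupp_mnm[simp]: "fsupp (mnm c \<alpha>)"
  by (simp add: fsupp_def supp_mnm)

lemma mnm_add: "mnm (c + e) \<alpha> = mnm c \<alpha> + mnm (e::'a::monoid_add) \<alpha>"
  by (rule ext) (simp add: mnm_def)

lemma mnm_zero[simp]: "mnm 0 \<alpha> = 0"
  by (auto simp: mnm_def)

lemma mnm_sum: "(mnm::'a::comm_monoid_add \<Rightarrow> _) (\<Sum>x\<in>A. c x) \<alpha> = (\<Sum>x\<in>A. mnm (c x) \<alpha>)"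
  by (induction A rule: infinite_finite_induct) (auto simp: mnm_add)

lemma lin_superset:
  assumes "finite S" "supp p \<subseteq> S" "\<And>\<alpha>. G 0 \<alpha> = 0"
  shows "lin G p = (\<Sum>\<alpha>\<in>S. G (p \<alpha>) \<alpha>)"
  unfolding lin_def
  by (rule sum.mono_neutral_left) (use assms in \<open>auto simp: supp_def\<close>)

lemma lin_add:
  fixes p q :: "(nat \<Rightarrow> nat) \<Rightarrow> 'a::monoid_add"
  assumes "fsupp p" "fsupp q" "\<And>\<alpha>. G 0 \<alpha> = 0" "\<And>c e \<alpha>. G (c + e) \<alpha> = G c \<alpha> + G e \<alpha>"
  shows "lin G (p + q) = lin G p + lin G q"
proof -
  let ?S = "supp p \<union> supp q"
  have f: "finite ?S" using assms unfolding fsupp_def by auto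
  have "lin G (p + q) = (\<Sum>\<alpha>\<in>?S. G ((p+q) \<alpha>) \<alpha>)"
    by (rule lin_superset) (use f supp_add[of p q] assms(3) in auto)
  also have "\<dots> = (\<Sum>\<alpha>\<in>?S. G (p \<alpha>) \<alpha>) + (\<Sum>\<alpha>\<in>?S. G (q \<alpha>) \<alpha>)"
    by (simp add: assms(4) sum.distrib)
  also have "\<dots> = lin G p + lin G q"
    using lin_superset[of ?S p G] lin_superset[of ?S q G] f assms(3) by auto
  finally show ?thesis .
qed

lemma lin_zero[simp]: "lin G 0 = 0"
  by (simp add: lin_def supp_def)

lemma lin_sum:
  fixes h :: "'c \<Rightarrow> (nat \<Rightarrow> nat) \<Rightarrow> 'a::comm_monoid_add"
  assumes "\<And>x. x \<in> A \<Longrightarrow> fsupp (h x)" "\<And>\<alpha>. G 0 \<alpha> = 0" "\<And>c e \<alpha>. G (c + e) \<alpha> = G c \<alpha> + G e \<alpha>"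
  shows "lin G (\<Sum>x\<in>A. h x) = (\<Sum>x\<in>A. lin G (h x))"
  using assms(1)
proof (induction A rule: infinite_finite_induct)
  case (insert x F)
  have "lin G (sum h (insert x F)) = lin G (h x + sum h F)"
    using insert by (simp only: sum.insert[OF insert(1,2)])
  also have "\<dots> = lin G (h x) + lin G (sum h F)"
    by (rule lin_add) (use insert assms(2,3) in \<open>auto intro: fsupp_sum\<close>)
  also have "\<dots> = lin G (h x) + (\<Sum>x\<in>F. lin G (h x))"
    using insert by auto
  finally show ?case using insert by (simp only: sum.insert[OF insert(1,2)])
qed auto

lemma lin_mnm: "G 0 \<alpha> = 0 \<Longrightarrow> lin G (mnm c \<alpha>) = G c \<alpha>"
  by (cases "c = 0") (auto simp: lin_def supp_mnm supp_def, auto simp: mnm_def)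

lemma decomp: "fsupp p \<Longrightarrow> p = (\<Sum>\<alpha>\<in>supp p. mnm (p \<alpha>) \<alpha>)"
  by (rule ext) (auto simp: sum_fun_app mnm_def fsupp_def supp_def)



definition ev :: "nat \<Rightarrow> nat \<Rightarrow> nat" where
  "ev i = (\<lambda>j. if j = i then 1 else 0)"

lemma const_mnm: "skp_const r = mnm r (\<lambda>_. 0)"
  by (simp add: skp_const_def mnm_def)

lemma var_mnm: "skp_var i = mnm 1 (ev i)"
  by (simp add: skp_var_def mnm_def ev_def)

lemma add_eq: "skp_add p q = p + q"
  by (simp add: skp_add_def plus_fun_def)

locale skp =
  fixes \<sigma> :: "'a::division_ring \<Rightarrow> 'a" and d :: nat
  assumes aut: "ring_aut \<sigma>"
begin

lemma sig_add: "\<sigma> (x + y) = \<sigma> x + \<sigma> y"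
  using aut by (simp add: ring_aut_def)
lemma sig_mult: "\<sigma> (x * y) = \<sigma> x * \<sigma> y"
  using aut by (simp add: ring_aut_def)
lemma sig_one: "\<sigma> 1 = 1"
  using aut by (simp add: ring_aut_def)
lemma sig_zero: "\<sigma> 0 = 0"
  using sig_add[of 0 0] by simp

lemma sgn_add: "(\<sigma>^^n) (x + y) = (\<sigma>^^n) x + (\<sigma>^^n) y"
  by (induction n) (auto simp: sig_add)
lemma sgn_mult: "(\<sigma>^^n) (x * y) = (\<sigma>^^n) x * (\<sigma>^^n) y"
  by (induction n) (auto simp: sig_mult)
lemma sgn_zero[simp]: "(\<sigma>^^n) 0 = 0"
  by (induction n) (auto simp: sig_zero)
lemma sgn_fix: "\<sigma> x = x \<Longrightarrow> (\<sigma>^^n) x = x"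
  by (induction n) auto
lemma sig_of_nat: "\<sigma> (of_nat k) = of_nat k"
  by (induction k) (auto simp: sig_add sig_one sig_zero)
lemma sgn_sum: "(\<sigma>^^n) (\<Sum>x\<in>A. f x) = (\<Sum>x\<in>A. (\<sigma>^^n) (f x))"
  by (induction A rule: infinite_finite_induct) (auto simp: sgn_add)

lemma mult_alt:
  assumes "finite S" "supp p \<subseteq> S"
  shows "skp_mult \<sigma> d p q \<gamma> = (\<Sum>\<alpha>\<in>S. if (\<forall>i. \<alpha> i \<le> \<gamma> i) then p \<alpha> * (\<sigma>^^mdeg d \<alpha>) (q (\<lambda>i. \<gamma> i - \<alpha> i)) else 0)"
proof -
  have "(\<Sum>\<alpha>\<in>S. if (\<forall>i. \<alpha> i \<le> \<gamma> i) then p \<alpha> * (\<sigma>^^mdeg d \<alpha>) (q (\<lambda>i. \<gamma> i - \<alpha> i)) else 0)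
     = (\<Sum>\<alpha>\<in>{\<alpha>\<in>S. \<forall>i. \<alpha> i \<le> \<gamma> i}. p \<alpha> * (\<sigma>^^mdeg d \<alpha>) (q (\<lambda>i. \<gamma> i - \<alpha> i)))"
    by (simp add: sum.inter_filter[OF assms(1)])
  also have "\<dots> = (\<Sum>\<alpha>\<in>{\<alpha>. p \<alpha> \<noteq> 0 \<and> (\<forall>i. \<alpha> i \<le> \<gamma> i)}. p \<alpha> * (\<sigma>^^mdeg d \<alpha>) (q (\<lambda>i. \<gamma> i - \<alpha> i)))"
    by (rule sum.mono_neutral_right) (use assms in \<open>auto simp: supp_def\<close>)
  finally show ?thesis by (simp add: skp_mult_def)
qed

lemma mult_add_left:
  assumes "fsupp p" "fsupp p'"
  shows "skp_mult \<sigma> d (p + p') q = skp_mult \<sigma> d p q + skp_mult \<sigma> d p' q"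
proof (rule ext)
  fix \<gamma>
  let ?S = "supp p \<union> supp p'"
  have f: "finite ?S" using assms by (auto simp: fsupp_def)
  show "skp_mult \<sigma> d (p + p') q \<gamma> = (skp_mult \<sigma> d p q + skp_mult \<sigma> d p' q) \<gamma>"
    unfolding plus_fun_apply
    using supp_add[of p p']
    by (subst (1 2 3) mult_alt[OF f]) (auto simp: sum.distrib[symmetric] distrib_right supp_def intro!: sum.cong)
qed

lemma mult_add_right:
  shows "skp_mult \<sigma> d p (q + q') = skp_mult \<sigma> d p q + skp_mult \<sigma> d p q'"
  by (rule ext) (simp add: skp_mult_def sgn_add distrib_left sum.distrib)

lemma mult_zero_left[simp]: "skp_mult \<sigma> d 0 q = 0"
  by (rule ext) (simp add: skp_mult_def)

lemma mult_zero_right[simp]: "skp_mult \<sigma> d p 0 = 0"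
  by (rule ext) (simp add: skp_mult_def)

lemma mult_sum_left:
  assumes "\<And>x. x \<in> A \<Longrightarrow> fsupp (h x)"
  shows "skp_mult \<sigma> d (\<Sum>x\<in>A. h x) q = (\<Sum>x\<in>A. skp_mult \<sigma> d (h x) q)"
  using assms
proof (induction A rule: infinite_finite_induct)
  case (insert x F)
  have "skp_mult \<sigma> d (sum h (insert x F)) q = skp_mult \<sigma> d (h x + sum h F) q"
    using insert by (simp only: sum.insert[OF insert(1,2)])
  also have "\<dots> = skp_mult \<sigma> d (h x) q + skp_mult \<sigma> d (sum h F) q"
    by (rule mult_add_left) (use insert in \<open>auto intro: fsupp_sum\<close>)
  also have "\<dots> = skp_mult \<sigma> d (h x) q + (\<Sum>x\<in>F. skp_mult \<sigma> d (h x) q)"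
    using insert by auto
  finally show ?case using insert by (simp only: sum.insert[OF insert(1,2)])
qed auto

lemma mult_sum_right:
  shows "skp_mult \<sigma> d p (\<Sum>x\<in>A. h x) = (\<Sum>x\<in>A. skp_mult \<sigma> d p (h x))"
proof (induction A rule: infinite_finite_induct)
  case (insert x F)
  then show ?case by (simp only: sum.insert[OF insert(1,2)] mult_add_right)
qed (auto simp: skp_mult_def fun_eq_iff)

lemma mult_mnm:
  "skp_mult \<sigma> d (mnm c \<alpha>) (mnm e \<beta>) = mnm (c * (\<sigma>^^mdeg d \<alpha>) e) (\<lambda>i. \<alpha> i + \<beta> i)"
proof (rule ext)
  fix \<gamma>
  have "skp_mult \<sigma> d (mnm c \<alpha>) (mnm e \<beta>) \<gamma> =
     (\<Sum>\<alpha>'\<in>{\<alpha>}. if (\<forall>i. \<alpha>' i \<le> \<gamma> i) then mnm c \<alpha> \<alpha>' * (\<sigma>^^mdeg d \<alpha>') (mnm e \<beta> (\<lambda>i. \<gamma> i - \<alpha>' i)) else 0)"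
    by (rule mult_alt) (auto simp: supp_mnm)
  also have "\<dots> = mnm (c * (\<sigma>^^mdeg d \<alpha>) e) (\<lambda>i. \<alpha> i + \<beta> i) \<gamma>"
  proof (cases "\<forall>i. \<alpha> i \<le> \<gamma> i")
    case True
    have "((\<lambda>i. \<gamma> i - \<alpha> i) = \<beta>) \<longleftrightarrow> \<gamma> = (\<lambda>i. \<alpha> i + \<beta> i)"
    proof
      assume "(\<lambda>i. \<gamma> i - \<alpha> i) = \<beta>"
      then show "\<gamma> = (\<lambda>i. \<alpha> i + \<beta> i)" using True by (auto simp: fun_eq_iff) (metis add_diff_inverse_nat not_le)
    qed auto
    then show ?thesis using True by (auto simp: mnm_def)
  next
    case False
    then have "\<gamma> \<noteq> (\<lambda>i. \<alpha> i + \<beta> i)" by auto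
    then show ?thesis using False by (auto simp: mnm_def)
  qed
  finally show "skp_mult \<sigma> d (mnm c \<alpha>) (mnm e \<beta>) \<gamma> = mnm (c * (\<sigma>^^mdeg d \<alpha>) e) (\<lambda>i. \<alpha> i + \<beta> i) \<gamma>" .
qed

end


definition dsup :: "nat \<Rightarrow> (nat \<Rightarrow> nat) \<Rightarrow> bool" where
  "dsup d \<alpha> \<longleftrightarrow> (\<forall>i\<ge>d. \<alpha> i = 0)"

lemma skpolys_iff: "p \<in> skpolys d \<longleftrightarrow> fsupp p \<and> (\<forall>\<alpha>\<in>supp p. dsup d \<alpha>)"
  by (auto simp: skpolys_def fsupp_def supp_def dsup_def)

lemma skpolys_add: "(p::(nat\<Rightarrow>nat)\<Rightarrow>'a::monoid_add) \<in> skpolys d \<Longrightarrow> q \<in> skpolys d \<Longrightarrow> p + q \<in> skpolys d"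
  unfolding skpolys_iff using supp_add[of p q] by (auto intro: fsupp_add)

lemma skpolys_zero[simp]: "0 \<in> skpolys d"
  by (simp add: skpolys_iff supp_def)

lemma skpolys_sum: "(\<And>x. x \<in> A \<Longrightarrow> h x \<in> skpolys d) \<Longrightarrow> (\<Sum>x\<in>A. h x :: (nat\<Rightarrow>nat)\<Rightarrow>'a::comm_monoid_add) \<in> skpolys d"
  by (induction A rule: infinite_finite_induct) (auto intro: skpolys_add)

lemma skpolys_sumX: "(\<And>x. x \<in> A \<Longrightarrow> h x \<in> skpolys d) \<Longrightarrow> (\<Sum>x\<in>A. h x) \<in> skpolys d"
  by (induction A rule: infinite_finite_induct) (auto intro: skpolys_add)

lemma skpolys_mnm: "dsup d \<alpha> \<Longrightarrow> mnm c \<alpha> \<in> skpolys d"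
  by (auto simp: skpolys_iff supp_mnm)

lemma sum_nz: "(\<Sum>x\<in>A. f x) \<noteq> (0::'b::comm_monoid_add) \<Longrightarrow> \<exists>x\<in>A. f x \<noteq> 0"
  by (meson sum.neutral)

definition cen :: "'a::ring_1 \<Rightarrow> bool" where
  "cen x \<longleftrightarrow> (\<forall>y. x * y = y * x)"

lemma cen_comm: "cen x \<Longrightarrow> x * y = y * x"
  by (simp add: cen_def)

lemma cen_mult: "cen x \<Longrightarrow> cen y \<Longrightarrow> cen (x * y)"
  unfolding cen_def by (metis mult.assoc)

lemma cen_one[simp]: "cen 1" and cen_zero[simp]: "cen 0"
  by (auto simp: cen_def)

lemma cen_pow: "cen x \<Longrightarrow> cen (x ^ n)"
  by (induction n) (auto intro: cen_mult)

lemma cen_of_nat[simp]: "cen (of_nat n)"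
  by (simp add: cen_def mult_of_nat_commute)

lemma cen_add: "cen x \<Longrightarrow> cen y \<Longrightarrow> cen (x + y)"
  by (auto simp: cen_def distrib_left distrib_right)

lemma cen_minus: "cen x \<Longrightarrow> cen y \<Longrightarrow> cen (x - y)"
  by (auto simp: cen_def left_diff_distrib right_diff_distrib)

context skp
begin

lemma lin_mult:
  assumes G0: "\<And>\<alpha>. G 0 \<alpha> = 0"
    and Gadd: "\<And>c e \<alpha>. G (c + e) \<alpha> = G c \<alpha> + G e \<alpha>"
    and Gfs: "\<And>c \<alpha>. fsupp (G c \<alpha>)"
    and Gmul: "\<And>c e \<alpha> \<beta>. dsup d \<alpha> \<Longrightarrow> dsup d \<beta> \<Longrightarrow>
        skp_mult \<sigma> d (G c \<alpha>) (G e \<beta>) = G (c * (\<sigma>^^mdeg d \<alpha>) e) (\<lambda>i. \<alpha> i + \<beta> i)"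
    and p: "p \<in> skpolys d" and q: "q \<in> skpolys d"
  shows "lin G (skp_mult \<sigma> d p q) = skp_mult \<sigma> d (lin G p) (lin G q)"
proof -
  have fp: "fsupp p" and fq: "fsupp q" using p q by (auto simp: skpolys_iff)
  have dp: "\<And>\<alpha>. \<alpha> \<in> supp p \<Longrightarrow> dsup d \<alpha>" and dq: "\<And>\<alpha>. \<alpha> \<in> supp q \<Longrightarrow> dsup d \<alpha>"
    using p q by (auto simp: skpolys_iff)
  have "skp_mult \<sigma> d p q = skp_mult \<sigma> d (\<Sum>\<alpha>\<in>supp p. mnm (p \<alpha>) \<alpha>) (\<Sum>\<beta>\<in>supp q. mnm (q \<beta>) \<beta>)"
    using decomp[OF fp] decomp[OF fq] by simp
  also have "\<dots> = (\<Sum>\<alpha>\<in>supp p. \<Sum>\<beta>\<in>supp q. skp_mult \<sigma> d (mnm (p \<alpha>) \<alpha>) (mnm (q \<beta>) \<beta>))"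
    unfolding mult_sum_left[of "supp p" "\<lambda>\<alpha>. mnm (p \<alpha>) \<alpha>", OF fsupp_mnm] mult_sum_right by (rule sum.swap)
  also have "\<dots> = (\<Sum>\<alpha>\<in>supp p. \<Sum>\<beta>\<in>supp q. mnm (p \<alpha> * (\<sigma>^^mdeg d \<alpha>) (q \<beta>)) (\<lambda>i. \<alpha> i + \<beta> i))"
    by (simp add: mult_mnm)
  finally have pq: "skp_mult \<sigma> d p q = \<dots>" .
  have "lin G (skp_mult \<sigma> d p q) = (\<Sum>\<alpha>\<in>supp p. \<Sum>\<beta>\<in>supp q. G (p \<alpha> * (\<sigma>^^mdeg d \<alpha>) (q \<beta>)) (\<lambda>i. \<alpha> i + \<beta> i))"
    unfolding pq
    by (simp add: lin_sum fsupp_sum G0 Gadd lin_mnm)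
  also have "\<dots> = (\<Sum>\<alpha>\<in>supp p. \<Sum>\<beta>\<in>supp q. skp_mult \<sigma> d (G (p \<alpha>) \<alpha>) (G (q \<beta>) \<beta>))"
    using dp dq by (simp add: Gmul)
  also have "\<dots> = skp_mult \<sigma> d (lin G p) (lin G q)"
    unfolding lin_def mult_sum_left[of "supp p" "\<lambda>\<alpha>. G (p \<alpha>) \<alpha>", OF Gfs] mult_sum_right by (rule sum.swap)
  finally show ?thesis .
qed

end


lemma additive_sum:
  fixes H :: "'c::comm_monoid_add \<Rightarrow> 'b::comm_monoid_add"
  assumes "H 0 = 0" "\<And>x y. H (x + y) = H x + H y"
  shows "H (\<Sum>x\<in>S. f x) = (\<Sum>x\<in>S. H (f x))"
  by (induction S rule: infinite_finite_induct) (auto simp: assms)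

lemma regroup:
  fixes H :: "nat \<Rightarrow> nat \<Rightarrow> 'b::comm_monoid_add"
  assumes H0: "\<And>k. H k 0 = 0" and Hadd: "\<And>k x y. H k (x + y) = H k x + H k y"
  shows "(\<Sum>j\<le>A. \<Sum>l\<le>B. H (j+l) ((A choose j) * (B choose l))) = (\<Sum>k\<le>A+B. H k ((A+B) choose k))"
proof -
  let ?g = "\<lambda>j l. H (j+l) ((A choose j) * (B choose l))"
  let ?T = "{(j,l). j + l \<le> A + B}"
  have fT: "finite ?T"
    by (rule finite_subset[of _ "{..A+B} \<times> {..A+B}"]) auto
  have "(\<Sum>j\<le>A. \<Sum>l\<le>B. ?g j l) = (\<Sum>(j,l)\<in>{..A} \<times> {..B}. ?g j l)"
    by (rule sum.cartesian_product)
  also have "\<dots> = (\<Sum>(j,l)\<in>?T. ?g j l)"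
  proof (rule sum.mono_neutral_left)
    show "\<forall>x\<in>?T - {..A} \<times> {..B}. (case x of (j, l) \<Rightarrow> ?g j l) = 0"
    proof
      fix x assume "x \<in> ?T - {..A} \<times> {..B}"
      then obtain j l where x: "x = (j, l)" "j > A \<or> l > B" by force
      have z: "(A choose j) * (B choose l) = 0" using x by auto
      show "(case x of (j, l) \<Rightarrow> ?g j l) = 0" unfolding x prod.case z H0 by (rule refl)
    qed
  qed (use fT in auto)
  also have "\<dots> = (\<Sum>k\<le>A+B. \<Sum>j\<le>k. ?g j (k - j))"
    by (rule sum.triangle_reindex_eq)
  also have "\<dots> = (\<Sum>k\<le>A+B. \<Sum>j\<le>k. H k ((A choose j) * (B choose (k - j))))"
    by (rule sum.cong) auto
  also have "\<dots> = (\<Sum>k\<le>A+B. H k (\<Sum>j\<le>k. (A choose j) * (B choose (k - j))))"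
    by (rule sum.cong[OF refl], rule additive_sum[symmetric]) (auto simp: H0 Hadd)
  also have "\<dots> = (\<Sum>k\<le>A+B. H k ((A+B) choose k))"
    by (simp add: vandermonde)
  finally show ?thesis .
qed

context skp
begin

definition sh :: "nat \<Rightarrow> nat \<Rightarrow> (nat \<Rightarrow> nat) \<Rightarrow> nat \<Rightarrow> nat" where
  "sh i k \<alpha> = \<alpha>(i := \<alpha> i - k, d - 1 := \<alpha> (d - 1) + k)"

definition GE :: "nat \<Rightarrow> 'a \<Rightarrow> 'a \<Rightarrow> (nat \<Rightarrow> nat) \<Rightarrow> (nat \<Rightarrow> nat) \<Rightarrow> 'a" where
  "GE i a c \<alpha> = (\<Sum>k\<le>\<alpha> i. mnm (c * (of_nat (\<alpha> i choose k) * a ^ k)) (sh i k \<alpha>))"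

definition E :: "nat \<Rightarrow> 'a \<Rightarrow> ((nat \<Rightarrow> nat) \<Rightarrow> 'a) \<Rightarrow> (nat \<Rightarrow> nat) \<Rightarrow> 'a" where
  "E i a = lin (GE i a)"

lemma sig_pow: "\<sigma> a = a \<Longrightarrow> \<sigma> (a ^ n) = a ^ n"
  by (induction n) (auto simp: sig_mult sig_one)

lemma mdeg_sh:
  assumes "i < d - 1" "k \<le> \<alpha> i"
  shows "mdeg d (sh i k \<alpha>) = mdeg d \<alpha>"
proof -
  have id: "d - 1 \<in> {..<d}" "i \<in> {..<d}" using assms by auto
  have "\<And>j. sh i k \<alpha> j + (if j = i then k else 0) = \<alpha> j + (if j = d - 1 then k else 0)"
    using assms by (auto simp: sh_def)
  then have "(\<Sum>j<d. sh i k \<alpha> j + (if j = i then k else 0)) = (\<Sum>j<d. \<alpha> j + (if j = d - 1 then k else 0))"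
    by simp
  then have "(\<Sum>j<d. sh i k \<alpha> j) + k = (\<Sum>j<d. \<alpha> j) + k"
    using id by (simp add: sum.distrib)
  then show ?thesis by (simp add: mdeg_def)
qed

lemma sh_add:
  assumes "i < d - 1" "j \<le> \<alpha> i" "l \<le> \<beta> i"
  shows "(\<lambda>t. sh i j \<alpha> t + sh i l \<beta> t) = sh i (j + l) (\<lambda>t. \<alpha> t + \<beta> t)"
  using assms by (auto simp: sh_def fun_eq_iff)

lemma GE0[simp]: "GE i a 0 \<alpha> = 0"
  by (simp add: GE_def)

lemma GEadd: "GE i a (c + e) \<alpha> = GE i a c \<alpha> + GE i a e \<alpha>"
  by (simp add: GE_def distrib_right mnm_add sum.distrib)

lemma GEfs: "fsupp (GE i a c \<alpha>)"
  by (simp add: GE_def fsupp_sum)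

lemma GEmul:
  assumes i: "i < d - 1" and a: "cen a" "\<sigma> a = a"
  shows "skp_mult \<sigma> d (GE i a c \<alpha>) (GE i a e \<beta>) = GE i a (c * (\<sigma>^^mdeg d \<alpha>) e) (\<lambda>j. \<alpha> j + \<beta> j)"
proof -
  define u where "u = c * (\<sigma>^^mdeg d \<alpha>) e"
  define H where "H = (\<lambda>k x. mnm (u * (of_nat x * a ^ k)) (sh i k (\<lambda>t. \<alpha> t + \<beta> t)))"
  have cpow: "\<And>n. cen (a ^ n)" using a by (simp add: cen_pow)
  have "skp_mult \<sigma> d (GE i a c \<alpha>) (GE i a e \<beta>) =
     (\<Sum>j\<le>\<alpha> i. \<Sum>l\<le>\<beta> i. skp_mult \<sigma> d (mnm (c * (of_nat (\<alpha> i choose j) * a ^ j)) (sh i j \<alpha>))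
         (mnm (e * (of_nat (\<beta> i choose l) * a ^ l)) (sh i l \<beta>)))"
    unfolding GE_def mult_sum_left[OF fsupp_mnm] mult_sum_right by (rule sum.swap)
  also have "\<dots> = (\<Sum>j\<le>\<alpha> i. \<Sum>l\<le>\<beta> i. H (j+l) ((\<alpha> i choose j) * (\<beta> i choose l)))"
  proof (intro sum.cong refl)
    fix j l assume j: "j \<in> {..\<alpha> i}" and l: "l \<in> {..\<beta> i}"
    let ?X = "of_nat (\<alpha> i choose j) * a ^ j :: 'a"
    let ?Y = "of_nat (\<beta> i choose l) * a ^ l :: 'a"
    let ?s = "(\<sigma>^^mdeg d \<alpha>) e"
    have sY: "(\<sigma>^^mdeg d \<alpha>) (e * ?Y) = ?s * ?Y"
      using a by (simp add: sgn_mult sgn_fix sig_of_nat sig_pow)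
    have cX: "cen ?X" using cpow by (simp add: cen_mult)
    have "?X * ?Y = of_nat (\<alpha> i choose j) * (a ^ j * of_nat (\<beta> i choose l)) * a ^ l"
      by (simp add: mult.assoc)
    also have "\<dots> = of_nat (\<alpha> i choose j) * (of_nat (\<beta> i choose l) * a ^ j) * a ^ l"
      using cen_comm[OF cpow[of j], of "of_nat (\<beta> i choose l)"] by simp
    also have "\<dots> = of_nat ((\<alpha> i choose j) * (\<beta> i choose l)) * a ^ (j + l)"
      by (simp add: mult.assoc power_add)
    finally have XY: "?X * ?Y = of_nat ((\<alpha> i choose j) * (\<beta> i choose l)) * a ^ (j + l)" .
    have "c * ?X * (?s * ?Y) = c * (?X * ?s) * ?Y" by (simp add: mult.assoc)
    also have "\<dots> = u * (?X * ?Y)" using cen_comm[OF cX, of ?s] by (simp add: u_def mult.assoc)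
    finally have coef: "c * ?X * (?s * ?Y) = u * (of_nat ((\<alpha> i choose j) * (\<beta> i choose l)) * a ^ (j + l))"
      using XY by simp
    show "skp_mult \<sigma> d (mnm (c * ?X) (sh i j \<alpha>)) (mnm (e * ?Y) (sh i l \<beta>)) =
          H (j+l) ((\<alpha> i choose j) * (\<beta> i choose l))"
      unfolding mult_mnm H_def
      using j l i sY coef by (simp add: mdeg_sh sh_add)
  qed
  also have "\<dots> = (\<Sum>k\<le>\<alpha> i + \<beta> i. H k ((\<alpha> i + \<beta> i) choose k))"
    by (rule regroup) (auto simp: H_def distrib_left distrib_right mnm_add)
  also have "\<dots> = GE i a u (\<lambda>j. \<alpha> j + \<beta> j)"
    by (simp add: GE_def H_def)
  finally show ?thesis by (simp add: u_def)
qed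

end


fun pw :: "(nat \<Rightarrow> 'a::ring_1) \<Rightarrow> (nat \<Rightarrow> nat) \<Rightarrow> nat \<Rightarrow> 'a" where
  "pw b \<alpha> 0 = 1"
| "pw b \<alpha> (Suc n) = pw b \<alpha> n * b n ^ \<alpha> n"

lemma pw_cong: "(\<And>j. j < n \<Longrightarrow> b j ^ \<alpha> j = b' j ^ \<alpha>' j) \<Longrightarrow> pw b \<alpha> n = pw b' \<alpha>' n"
  by (induction n) auto

lemma cen_pw: "(\<And>j. j < n \<Longrightarrow> cen (b j)) \<Longrightarrow> cen (pw b \<alpha> n)"
  by (induction n) (auto intro: cen_mult cen_pow)

lemma pw_split:
  "(\<And>j. j < n \<Longrightarrow> cen (b j)) \<Longrightarrow> i < n \<Longrightarrow> pw b \<alpha> n = pw b (\<alpha>(i:=0)) n * b i ^ \<alpha> i"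
proof (induction n)
  case (Suc n)
  show ?case
  proof (cases "i = n")
    case True
    have "pw b \<alpha> n = pw b (\<alpha>(i:=0)) n" by (rule pw_cong) (use True in auto)
    moreover have "pw b (\<alpha>(i:=0)) (Suc n) = pw b (\<alpha>(i:=0)) n"
      by (simp only: pw.simps fun_upd_same True power_0 mult_1_right)
    ultimately show ?thesis using True by (simp only: pw.simps)
  next
    case False
    then have "i < n" using Suc by auto
    then have 1: "pw b \<alpha> n = pw b (\<alpha>(i:=0)) n * b i ^ \<alpha> i"
      by (rule Suc.IH[rotated]) (use Suc.prems in auto)
    have 2: "pw b (\<alpha>(i:=0)) (Suc n) = pw b (\<alpha>(i:=0)) n * b n ^ \<alpha> n"
      using False by (simp only: pw.simps fun_upd_other)
    have "cen (b i ^ \<alpha> i)" using Suc \<open>i < n\<close> by (auto intro: cen_pow)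
    then have 3: "b i ^ \<alpha> i * b n ^ \<alpha> n = b n ^ \<alpha> n * b i ^ \<alpha> i" by (rule cen_comm)
    have "pw b \<alpha> (Suc n) = pw b (\<alpha>(i:=0)) n * (b i ^ \<alpha> i * b n ^ \<alpha> n)"
      using 1 by (simp only: pw.simps mult.assoc)
    also have "\<dots> = pw b (\<alpha>(i:=0)) (Suc n) * b i ^ \<alpha> i"
      using 2 3 by (simp only: mult.assoc)
    finally show ?thesis .
  qed
qed simp

context skp
begin

definition degb :: "nat \<Rightarrow> ((nat \<Rightarrow> nat) \<Rightarrow> 'a) \<Rightarrow> bool" where
  "degb m p \<longleftrightarrow> (\<forall>\<gamma>. p \<gamma> \<noteq> 0 \<longrightarrow> mdeg d \<gamma> \<le> m)"

definition Lf :: "(nat \<Rightarrow> 'a) \<Rightarrow> nat \<Rightarrow> ((nat \<Rightarrow> nat) \<Rightarrow> 'a) \<Rightarrow> 'a" where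
  "Lf b m = lin (\<lambda>c \<alpha>. if mdeg d \<alpha> = m then c * pw b \<alpha> (d - 1) else 0)"

lemma Lf_sum:
  "(\<And>x. x \<in> A \<Longrightarrow> fsupp (h x)) \<Longrightarrow> Lf b m (\<Sum>x\<in>A. h x) = (\<Sum>x\<in>A. Lf b m (h x))"
  unfolding Lf_def by (rule lin_sum) (auto simp: distrib_right)

lemma Lf_mnm: "Lf b m (mnm c \<alpha>) = (if mdeg d \<alpha> = m then c * pw b \<alpha> (d - 1) else 0)"
  unfolding Lf_def by (rule lin_mnm) simp

lemma dsup_sh: "i < d - 1 \<Longrightarrow> dsup d \<alpha> \<Longrightarrow> dsup d (sh i k \<alpha>)"
  by (auto simp: dsup_def sh_def)

lemma E_mnm: "E i a (mnm c \<alpha>) = GE i a c \<alpha>"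
  unfolding E_def by (rule lin_mnm) simp

lemma E_skpolys:
  assumes "i < d - 1" "p \<in> skpolys d"
  shows "E i a p \<in> skpolys d"
  unfolding E_def lin_def GE_def
proof (intro skpolys_sum skpolys_mnm dsup_sh)
  fix \<alpha> assume "\<alpha> \<in> supp p"
  then show "dsup d \<alpha>" using assms by (auto simp: skpolys_iff)
qed (use assms in auto)

lemma E_add:
  "p \<in> skpolys d \<Longrightarrow> q \<in> skpolys d \<Longrightarrow> E i a (p + q) = E i a p + E i a q"
  unfolding E_def by (rule lin_add) (auto simp: skpolys_iff GEadd)

lemma E_mult:
  assumes "i < d - 1" "cen a" "\<sigma> a = a" "p \<in> skpolys d" "q \<in> skpolys d"
  shows "E i a (skp_mult \<sigma> d p q) = skp_mult \<sigma> d (E i a p) (E i a q)"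
  unfolding E_def by (rule lin_mult) (use assms in \<open>auto simp: GEadd GEfs GEmul\<close>)

lemma GE_fix: "\<alpha> i = 0 \<Longrightarrow> GE i a c \<alpha> = mnm c \<alpha>"
  by (simp add: GE_def sh_def fun_upd_idem)

lemma GE_var:
  assumes "i < d - 1"
  shows "GE i a 1 (ev i) = mnm 1 (ev i) + mnm a (ev (d - 1))"
proof -
  have "sh i 0 (ev i) = ev i" "sh i 1 (ev i) = ev (d - 1)"
    using assms by (auto simp: sh_def ev_def fun_eq_iff)
  then show ?thesis by (simp add: GE_def ev_def)
qed

lemma E_degb:
  assumes "i < d - 1" "fsupp p" "degb m p"
  shows "degb m (E i a p)"
  unfolding degb_def
proof (intro allI impI)
  fix \<gamma> assume "E i a p \<gamma> \<noteq> 0"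
  then obtain \<alpha> where \<alpha>: "\<alpha> \<in> supp p" "GE i a (p \<alpha>) \<alpha> \<gamma> \<noteq> 0"
    unfolding E_def lin_def sum_fun_app by (auto dest: sum_nz)
  then obtain k where k: "k \<le> \<alpha> i" "mnm (p \<alpha> * (of_nat (\<alpha> i choose k) * a ^ k)) (sh i k \<alpha>) \<gamma> \<noteq> 0"
    unfolding GE_def sum_fun_app by (auto dest: sum_nz)
  then have "\<gamma> = sh i k \<alpha>" by (auto simp: mnm_def split: if_splits)
  then have "mdeg d \<gamma> = mdeg d \<alpha>" using mdeg_sh assms(1) k(1) by simp
  then show "mdeg d \<gamma> \<le> m" using assms(3) \<alpha>(1) by (auto simp: degb_def supp_def)
qed

lemma Lf_GE:
  assumes i: "i < d - 1" and a: "cen a" and b: "\<And>j. j < d - 1 \<Longrightarrow> cen (b j)" and bi: "b i = 0"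
  shows "Lf b m (GE i a c \<alpha>) = (if mdeg d \<alpha> = m then c * pw (b(i:=a)) \<alpha> (d - 1) else 0)"
proof -
  let ?A = "\<alpha> i"
  let ?P = "pw b (\<alpha>(i:=0)) (d - 1)"
  have "Lf b m (GE i a c \<alpha>) = (\<Sum>k\<le>?A. if mdeg d \<alpha> = m then c * (of_nat (?A choose k) * a ^ k) * pw b (sh i k \<alpha>) (d - 1) else 0)"
    unfolding GE_def by (simp add: Lf_sum Lf_mnm mdeg_sh[OF i])
  also have "\<dots> = (\<Sum>k\<le>?A. if k = ?A then (if mdeg d \<alpha> = m then c * a ^ ?A * ?P else 0) else 0)"
  proof (rule sum.cong[OF refl])
    fix k assume k: "k \<in> {..?A}"
    have "pw b (sh i k \<alpha>) (d - 1) = pw b (\<alpha>(i := ?A - k)) (d - 1)"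
      by (rule pw_cong) (auto simp: sh_def)
    also have "\<dots> = pw b (\<alpha>(i:=0)) (d - 1) * 0 ^ (?A - k)"
      using pw_split[of "d - 1" b i "\<alpha>(i := ?A - k)", OF b i] bi by simp
    finally have "pw b (sh i k \<alpha>) (d - 1) = ?P * 0 ^ (?A - k)" .
    then show "(if mdeg d \<alpha> = m then c * (of_nat (?A choose k) * a ^ k) * pw b (sh i k \<alpha>) (d - 1) else 0) =
       (if k = ?A then (if mdeg d \<alpha> = m then c * a ^ ?A * ?P else 0) else 0)"
      using k by auto
  qed
  also have "\<dots> = (if mdeg d \<alpha> = m then c * a ^ ?A * ?P else 0)"
    by (simp add: sum.delta')
  also have "\<dots> = (if mdeg d \<alpha> = m then c * pw (b(i:=a)) \<alpha> (d - 1) else 0)"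
  proof -
    have "pw (b(i:=a)) \<alpha> (d - 1) = pw (b(i:=a)) (\<alpha>(i:=0)) (d - 1) * a ^ ?A"
      using pw_split[of "d - 1" "b(i:=a)" i \<alpha>] b a i by auto
    also have "pw (b(i:=a)) (\<alpha>(i:=0)) (d - 1) = ?P"
      by (rule pw_cong) auto
    finally have X: "pw (b(i:=a)) \<alpha> (d - 1) = ?P * a ^ ?A" .
    have Y: "a ^ ?A * ?P = ?P * a ^ ?A" by (rule cen_comm[OF cen_pow[OF a]])
    show ?thesis by (simp only: X Y[symmetric] mult.assoc)
  qed
  finally show ?thesis .
qed

lemma Lf_E:
  assumes i: "i < d - 1" and a: "cen a" and b: "\<And>j. j < d - 1 \<Longrightarrow> cen (b j)" and bi: "b i = 0"
    and p: "fsupp p"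
  shows "Lf b m (E i a p) = Lf (b(i:=a)) m p"
proof -
  have "Lf b m (E i a p) = (\<Sum>\<alpha>\<in>supp p. Lf b m (GE i a (p \<alpha>) \<alpha>))"
    unfolding E_def lin_def by (rule Lf_sum) (simp add: GEfs)
  also have "\<dots> = (\<Sum>\<alpha>\<in>supp p. if mdeg d \<alpha> = m then p \<alpha> * pw (b(i:=a)) \<alpha> (d - 1) else 0)"
    by (rule sum.cong[OF refl]) (rule Lf_GE, use i a b bi in auto)
  also have "\<dots> = Lf (b(i:=a)) m p"
    by (simp add: Lf_def lin_def)
  finally show ?thesis .
qed

end


context skp
begin

primrec Phi :: "(nat \<Rightarrow> 'a) \<Rightarrow> nat \<Rightarrow> ((nat \<Rightarrow> nat) \<Rightarrow> 'a) \<Rightarrow> ((nat \<Rightarrow> nat) \<Rightarrow> 'a)" where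
  "Phi as 0 = id"
| "Phi as (Suc n) = Phi as n \<circ> E n (as n)"

lemma Phi_skpolys: "n \<le> d - 1 \<Longrightarrow> p \<in> skpolys d \<Longrightarrow> Phi as n p \<in> skpolys d"
proof (induction n arbitrary: p)
  case (Suc n) then show ?case using E_skpolys[of n p "as n"] by simp
qed simp

lemma Phi_add: "n \<le> d - 1 \<Longrightarrow> p \<in> skpolys d \<Longrightarrow> q \<in> skpolys d \<Longrightarrow> Phi as n (p + q) = Phi as n p + Phi as n q"
  by (induction n arbitrary: p q) (auto simp: E_add E_skpolys)

lemma Phi_mult:
  assumes AS: "\<And>j. j < d - 1 \<Longrightarrow> cen (as j) \<and> \<sigma> (as j) = as j"
  shows "n \<le> d - 1 \<Longrightarrow> p \<in> skpolys d \<Longrightarrow> q \<in> skpolys d \<Longrightarrow>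
     Phi as n (skp_mult \<sigma> d p q) = skp_mult \<sigma> d (Phi as n p) (Phi as n q)"
  by (induction n arbitrary: p q) (auto simp: E_mult E_skpolys AS)

lemma Phi_fix: "n \<le> d - 1 \<Longrightarrow> (\<And>j. j < n \<Longrightarrow> \<alpha> j = 0) \<Longrightarrow> Phi as n (mnm c \<alpha>) = mnm c \<alpha>"
  by (induction n) (auto simp: E_mnm GE_fix)

lemma dsup_ev: "i < d \<Longrightarrow> dsup d (ev i)"
  by (auto simp: dsup_def ev_def)

lemma Phi_var:
  assumes "i < d - 1"
  shows "n \<le> d - 1 \<Longrightarrow> Phi as n (mnm 1 (ev i)) =
     (if i < n then mnm 1 (ev i) + mnm (as i) (ev (d - 1)) else mnm 1 (ev i))"
proof (induction n)
  case (Suc n)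
  show ?case
  proof (cases "i = n")
    case True
    have "Phi as (Suc n) (mnm 1 (ev i)) = Phi as n (mnm 1 (ev n) + mnm (as n) (ev (d - 1)))"
      using True assms by (simp add: E_mnm GE_var)
    also have "\<dots> = Phi as n (mnm 1 (ev n)) + Phi as n (mnm (as n) (ev (d - 1)))"
      using Suc.prems assms True by (intro Phi_add skpolys_mnm dsup_ev) auto
    also have "\<dots> = mnm 1 (ev n) + mnm (as n) (ev (d - 1))"
      using Suc.prems by (subst (1 2) Phi_fix) (auto simp: ev_def)
    finally show ?thesis using True by simp
  next
    case False
    have "Phi as (Suc n) (mnm 1 (ev i)) = Phi as n (mnm 1 (ev i))"
      using False by (simp add: E_mnm GE_fix ev_def)
    then show ?thesis using Suc False by auto
  qed
qed simp

lemma Phi_degb: "n \<le> d - 1 \<Longrightarrow> p \<in> skpolys d \<Longrightarrow> degb m p \<Longrightarrow> degb m (Phi as n p)"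
proof (induction n arbitrary: p)
  case (Suc n)
  have "E n (as n) p \<in> skpolys d" "degb m (E n (as n) p)"
    using Suc.prems E_skpolys[of n p "as n"] E_degb[of n p m "as n"] by (auto simp: skpolys_iff)
  then show ?case using Suc by simp
qed simp

lemma Lf_Phi:
  assumes AS: "\<And>j. j < d - 1 \<Longrightarrow> cen (as j)"
  shows "n \<le> d - 1 \<Longrightarrow> p \<in> skpolys d \<Longrightarrow>
     Lf (\<lambda>_. 0) m (Phi as n p) = Lf (\<lambda>j. if j < n then as j else 0) m p"
proof (induction n arbitrary: p)
  case 0
  then show ?case by simp
next
  case (Suc n)
  have "Lf (\<lambda>_. 0) m (Phi as (Suc n) p) = Lf (\<lambda>j. if j < n then as j else 0) m (E n (as n) p)"
    using Suc by (simp add: E_skpolys)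
  also have "\<dots> = Lf ((\<lambda>j. if j < n then as j else 0)(n := as n)) m p"
    by (rule Lf_E) (use Suc.prems AS in \<open>auto simp: skpolys_iff\<close>)
  also have "(\<lambda>j. if j < n then as j else 0)(n := as n) = (\<lambda>j. if j < Suc n then as j else 0)"
    by (auto simp: fun_eq_iff)
  finally show ?case .
qed

end


lemma tele_aux:
  fixes x y X Y :: "'a::ring_1"
  assumes "y * X = X * y"
  shows "y * (X - Y) + X * (x - y) = X * x - y * Y"
  using assms by (simp add: algebra_simps)

lemma tele:
  fixes x y :: "'a::ring_1"
  assumes "cen x" "cen y"
  shows "(\<Sum>j\<le>n. y ^ (n - j) * x ^ j) * (x - y) = x ^ Suc n - y ^ Suc n"
proof (induction n)
  case 0
  then show ?case by simp
next
  case (Suc n)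
  have "(\<Sum>j\<le>Suc n. y ^ (Suc n - j) * x ^ j) = y * (\<Sum>j\<le>n. y ^ (n - j) * x ^ j) + x ^ Suc n"
  proof -
    have "(\<Sum>j\<le>n. y ^ (Suc n - j) * x ^ j) = (\<Sum>j\<le>n. y * (y ^ (n - j) * x ^ j))"
      by (rule sum.cong) (auto simp: Suc_diff_le mult.assoc)
    then show ?thesis by (simp add: sum_distrib_left)
  qed
  then have "(\<Sum>j\<le>Suc n. y ^ (Suc n - j) * x ^ j) * (x - y) =
      y * ((\<Sum>j\<le>n. y ^ (n - j) * x ^ j) * (x - y)) + x ^ Suc n * (x - y)"
    by (simp add: distrib_right mult.assoc)
  also have "\<dots> = y * (x ^ Suc n - y ^ Suc n) + x ^ Suc n * (x - y)"
    using Suc by simp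
  also have "\<dots> = x ^ Suc (Suc n) - y ^ Suc (Suc n)"
  proof -
    have "y * x ^ Suc n = x ^ Suc n * y" using cen_comm[OF assms(2)] by blast
    from tele_aux[OF this, of "y ^ Suc n" x]
    show ?thesis by (simp only: power_Suc2[symmetric] power_Suc[symmetric])
  qed
  finally show ?case .
qed

definition quot :: "(nat \<Rightarrow> 'a::ring_1) \<Rightarrow> 'a \<Rightarrow> nat \<Rightarrow> nat \<Rightarrow> 'a" where
  "quot q y M j = (\<Sum>k\<in>{Suc j..Suc M}. q k * y ^ (k - Suc j))"

lemma quot_key:
  fixes x y :: "'a::ring_1"
  assumes "cen x" "cen y"
  shows "(\<Sum>j\<le>M. quot q y M j * x ^ j) * (x - y) = (\<Sum>k\<le>Suc M. q k * x ^ k) - (\<Sum>k\<le>Suc M. q k * y ^ k)"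
proof -
  have "(\<Sum>j\<le>M. quot q y M j * x ^ j) * (x - y)
      = (\<Sum>j\<le>M. \<Sum>k\<in>{k. k \<in> {..Suc M} \<and> Suc j \<le> k}. q k * (y ^ (k - Suc j) * x ^ j * (x - y)))"
  proof -
    have "\<And>j. {k. k \<in> {..Suc M} \<and> Suc j \<le> k} = {Suc j..Suc M}" by auto
    then have "(\<Sum>j\<le>M. \<Sum>k\<in>{k. k \<in> {..Suc M} \<and> Suc j \<le> k}. q k * (y ^ (k - Suc j) * x ^ j * (x - y)))
       = (\<Sum>j\<le>M. \<Sum>k\<in>{Suc j..Suc M}. q k * (y ^ (k - Suc j) * x ^ j * (x - y)))"
      by (simp only:)
    then show ?thesis
      by (simp only: quot_def sum_distrib_right mult.assoc)
  qed
  also have "\<dots> = (\<Sum>k\<le>Suc M. \<Sum>j\<in>{j. j \<in> {..M} \<and> Suc j \<le> k}. q k * (y ^ (k - Suc j) * x ^ j * (x - y)))"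
    by (rule sum.swap_restrict) auto
  also have "\<dots> = (\<Sum>k\<le>Suc M. q k * (x ^ k - y ^ k))"
  proof (rule sum.cong[OF refl])
    fix k assume k: "k \<in> {..Suc M}"
    show "(\<Sum>j\<in>{j. j \<in> {..M} \<and> Suc j \<le> k}. q k * (y ^ (k - Suc j) * x ^ j * (x - y))) = q k * (x ^ k - y ^ k)"
    proof (cases k)
      case 0
      then show ?thesis by simp
    next
      case (Suc n)
      have "{j. j \<in> {..M} \<and> Suc j \<le> k} = {..n}" using k Suc by auto
      moreover have "\<And>j. y ^ (k - Suc j) = y ^ (n - j)" using Suc by simp
      ultimately have "(\<Sum>j\<in>{j. j \<in> {..M} \<and> Suc j \<le> k}. q k * (y ^ (k - Suc j) * x ^ j * (x - y)))
          = q k * ((\<Sum>j\<le>n. y ^ (n - j) * x ^ j) * (x - y))"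
        by (simp add: sum_distrib_left sum_distrib_right mult.assoc)
      then show ?thesis using tele[OF assms, of n] Suc by simp
    qed
  qed
  also have "\<dots> = (\<Sum>k\<le>Suc M. q k * x ^ k) - (\<Sum>k\<le>Suc M. q k * y ^ k)"
    by (simp add: right_diff_distrib sum_subtractf)
  finally show ?thesis .
qed

lemma quot_rec:
  fixes y :: "'a::ring_1"
  assumes "j \<le> M"
  shows "quot q y M j = q (Suc j) + quot q y M (Suc j) * y"
proof -
  have "{Suc j..Suc M} = insert (Suc j) {Suc (Suc j)..Suc M}" using assms by auto
  then have "quot q y M j = q (Suc j) + (\<Sum>k\<in>{Suc (Suc j)..Suc M}. q k * y ^ (k - Suc j))"
    by (simp add: quot_def)
  also have "(\<Sum>k\<in>{Suc (Suc j)..Suc M}. q k * y ^ (k - Suc j)) = (\<Sum>k\<in>{Suc (Suc j)..Suc M}. q k * y ^ (k - Suc (Suc j)) * y)"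
  proof (rule sum.cong[OF refl])
    fix k assume "k \<in> {Suc (Suc j)..Suc M}"
    then have "k - Suc j = Suc (k - Suc (Suc j))" by auto
    then show "q k * y ^ (k - Suc j) = q k * y ^ (k - Suc (Suc j)) * y"
        by (simp add: mult.assoc power_commutes)
  qed
  finally show ?thesis by (simp only: quot_def sum_distrib_right)
qed

lemma quot_last: "quot q y M (Suc M) = 0"
  by (simp add: quot_def)

lemma root_bound:
  fixes q :: "nat \<Rightarrow> 'a::division_ring"
  shows "finite X \<Longrightarrow> (\<And>x. x \<in> X \<Longrightarrow> cen x) \<Longrightarrow> card X > N \<Longrightarrow>
    (\<And>x. x \<in> X \<Longrightarrow> (\<Sum>k\<le>N. q k * x ^ k) = 0) \<Longrightarrow> k \<le> N \<Longrightarrow> q k = 0"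
proof (induction N arbitrary: q X k)
  case 0
  then obtain x where "x \<in> X" by (metis card.empty ex_in_conv less_irrefl)
  then show ?case using 0 by auto
next
  case (Suc M)
  then obtain x0 where x0: "x0 \<in> X" by (metis card.empty ex_in_conv not_less0)
  let ?r = "quot q x0 M"
  have P0: "(\<Sum>k\<le>Suc M. q k * x0 ^ k) = 0" using Suc.prems x0 by auto
  have r0: "?r j = 0" if "j \<le> M" for j
  proof (rule Suc.IH[of "X - {x0}"])
    show "finite (X - {x0})" using Suc.prems by auto
    show "card (X - {x0}) > M" using Suc.prems x0 by auto
    fix x assume x: "x \<in> X - {x0}"
    then have cx: "cen x" using Suc.prems by auto
    have "(\<Sum>j\<le>M. ?r j * x ^ j) * (x - x0) = 0"
      using quot_key[OF cx Suc.prems(2)[OF x0], of q M] P0 Suc.prems(4) x by auto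
    moreover have "x - x0 \<noteq> 0" using x by auto
    ultimately show "(\<Sum>j\<le>M. ?r j * x ^ j) = 0" by simp
  qed (use that Suc.prems in auto)
  have qs: "q (Suc j) = 0" if "j \<le> M" for j
  proof (cases "j = M")
    case True
    then show ?thesis using quot_rec[of M M q x0] quot_last[of q x0 M] r0[of M] by simp
  next
    case False
    then show ?thesis using quot_rec[of j M q x0] r0[of j] r0[of "Suc j"] that by simp
  qed
  show ?case
  proof (cases k)
    case 0
    have "(\<Sum>k\<le>Suc M. q k * x0 ^ k) = q 0 + (\<Sum>k\<le>M. q (Suc k) * x0 ^ Suc k)"
      by (simp only: sum.atMost_Suc_shift power_0 mult_1_right)
    also have "\<dots> = q 0" using qs by simp
    finally show ?thesis using P0 0 by simp
  next
    case (Suc j)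
    then show ?thesis using qs Suc.prems(5) by auto
  qed
qed

lemma nonroot:
  fixes q :: "nat \<Rightarrow> 'a::division_ring"
  assumes "infinite F" "\<And>x. x \<in> F \<Longrightarrow> cen x" "q k \<noteq> 0" "k \<le> N"
  shows "\<exists>x\<in>F. (\<Sum>k\<le>N. q k * x ^ k) \<noteq> 0"
proof (rule ccontr)
  assume H: "\<not> ?thesis"
  obtain X where X: "finite X" "card X = Suc N" "X \<subseteq> F"
    using infinite_arbitrarily_large[OF assms(1)] by blast
  have "q k = 0"
    by (rule root_bound[of X N q k]) (use X H assms in auto)
  then show False using assms by simp
qed

lemma nz_multi:
  fixes c :: "(nat \<Rightarrow> nat) \<Rightarrow> 'a::division_ring"
  assumes F: "infinite F" "\<And>x. x \<in> F \<Longrightarrow> cen x"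
  shows "finite S \<Longrightarrow> (\<forall>\<alpha>\<in>S. \<forall>\<beta>\<in>S. (\<forall>j<n. \<alpha> j = \<beta> j) \<longrightarrow> \<alpha> = \<beta>) \<Longrightarrow> \<alpha>0 \<in> S \<Longrightarrow> c \<alpha>0 \<noteq> 0 \<Longrightarrow>
    \<exists>b. (\<forall>j. b j \<in> F) \<and> (\<Sum>\<alpha>\<in>S. c \<alpha> * pw b \<alpha> n) \<noteq> 0"
proof (induction n arbitrary: S \<alpha>0)
  case 0
  then have "S = {\<alpha>0}" by auto
  moreover obtain x where "x \<in> F" using F(1) by (metis ex_in_conv finite.emptyI)
  ultimately show ?case using 0 by (intro exI[of _ "\<lambda>_. x"]) auto
next
  case (Suc n)
  define e0 where "e0 = \<alpha>0 n"
  define S0 where "S0 = {\<alpha>\<in>S. \<alpha> n = e0}"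
  have "\<exists>b. (\<forall>j. b j \<in> F) \<and> (\<Sum>\<alpha>\<in>S0. c \<alpha> * pw b \<alpha> n) \<noteq> 0"
  proof (rule Suc.IH)
    show "finite S0" using Suc.prems by (simp add: S0_def)
    show "\<alpha>0 \<in> S0" using Suc.prems by (simp add: S0_def e0_def)
    show "c \<alpha>0 \<noteq> 0" using Suc.prems by simp
    show "\<forall>\<alpha>\<in>S0. \<forall>\<beta>\<in>S0. (\<forall>j<n. \<alpha> j = \<beta> j) \<longrightarrow> \<alpha> = \<beta>"
    proof (intro ballI impI)
      fix \<alpha> \<beta> assume ab: "\<alpha> \<in> S0" "\<beta> \<in> S0" "\<forall>j<n. \<alpha> j = \<beta> j"
      then have "\<forall>j<Suc n. \<alpha> j = \<beta> j" by (auto simp: S0_def less_Suc_eq)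
      then show "\<alpha> = \<beta>" using Suc.prems(2) ab by (auto simp: S0_def)
    qed
  qed
  then obtain b where b: "\<forall>j. b j \<in> F" "(\<Sum>\<alpha>\<in>S0. c \<alpha> * pw b \<alpha> n) \<noteq> 0" by blast
  define T where "T = (\<lambda>\<alpha>. \<alpha> n) ` S"
  define N where "N = Max T"
  have fT: "finite T" using Suc.prems by (simp add: T_def)
  have TN: "\<And>e. e \<in> T \<Longrightarrow> e \<le> N" using fT by (simp add: N_def)
  define qq where "qq = (\<lambda>e. \<Sum>\<alpha>\<in>{\<alpha>\<in>S. \<alpha> n = e}. c \<alpha> * pw b \<alpha> n)"
  have "qq e0 \<noteq> 0" using b(2) by (simp add: qq_def S0_def)
  moreover have "e0 \<le> N" using TN Suc.prems(3) by (simp add: T_def e0_def)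
  ultimately obtain x where x: "x \<in> F" "(\<Sum>e\<le>N. qq e * x ^ e) \<noteq> 0"
    using nonroot[OF F, of qq e0 N] by blast
  define b' where "b' = b(n := x)"
  have "(\<Sum>\<alpha>\<in>S. c \<alpha> * pw b' \<alpha> (Suc n)) = (\<Sum>\<alpha>\<in>S. c \<alpha> * pw b \<alpha> n * x ^ \<alpha> n)"
  proof (rule sum.cong[OF refl])
    fix \<alpha> assume "\<alpha> \<in> S"
    have "pw b' \<alpha> n = pw b \<alpha> n" by (rule pw_cong) (simp add: b'_def)
    then show "c \<alpha> * pw b' \<alpha> (Suc n) = c \<alpha> * pw b \<alpha> n * x ^ \<alpha> n"
      by (simp add: b'_def mult.assoc)
  qed
  also have "\<dots> = (\<Sum>e\<in>{..N}. \<Sum>\<alpha>\<in>{\<alpha>\<in>S. \<alpha> n = e}. c \<alpha> * pw b \<alpha> n * x ^ \<alpha> n)"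
    by (rule sum.group[symmetric]) (use Suc.prems TN in \<open>auto simp: T_def\<close>)
  also have "\<dots> = (\<Sum>e\<le>N. qq e * x ^ e)"
    by (auto simp: qq_def sum_distrib_right intro!: sum.cong)
  finally have "(\<Sum>\<alpha>\<in>S. c \<alpha> * pw b' \<alpha> (Suc n)) \<noteq> 0" using x by simp
  moreover have "\<forall>j. b' j \<in> F" using b x by (simp add: b'_def)
  ultimately show ?case by blast
qed



lemma pw_zero: "pw (\<lambda>_. 0) \<gamma> n = (if \<forall>j<n. \<gamma> j = 0 then 1 else 0)"
  by (induction n) (auto simp: less_Suc_eq power_0_left)

lemma mdeg_split: "d \<ge> 1 \<Longrightarrow> mdeg d \<alpha> = (\<Sum>j<d - 1. \<alpha> j) + \<alpha> (d - 1)"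
proof -
  assume "d \<ge> 1"
  then have "d = Suc (d - 1)" by simp
  then show ?thesis unfolding mdeg_def by (metis sum.lessThan_Suc)
qed

lemma mdeg_ge: "j < d \<Longrightarrow> \<alpha> j \<le> mdeg d \<alpha>"
  unfolding mdeg_def by (rule member_le_sum) auto

lemma mdeg_ge2: "j < d \<Longrightarrow> k < d \<Longrightarrow> j \<noteq> k \<Longrightarrow> \<alpha> j + \<alpha> k \<le> mdeg d \<alpha>"
proof -
  assume a: "j < d" "k < d" "j \<noteq> k"
  have "\<alpha> j + \<alpha> k = (\<Sum>i\<in>{j,k}. \<alpha> i)" using a by simp
  also have "\<dots> \<le> (\<Sum>i<d. \<alpha> i)" by (rule sum_mono2) (use a in auto)
  finally show ?thesis by (simp add: mdeg_def)
qed

context skp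
begin

lemma mult_const: "skp_mult \<sigma> d (skp_const a) g = (\<lambda>\<gamma>. a * g \<gamma>)"
proof (rule ext)
  fix \<gamma>
  have "skp_mult \<sigma> d (mnm a (\<lambda>_. 0)) g \<gamma> =
    (\<Sum>\<alpha>\<in>{\<lambda>_. 0}. if (\<forall>i. \<alpha> i \<le> \<gamma> i) then mnm a (\<lambda>_. 0) \<alpha> * (\<sigma>^^mdeg d \<alpha>) (g (\<lambda>i. \<gamma> i - \<alpha> i)) else 0)"
    by (rule mult_alt) (auto simp: supp_mnm)
  then show "skp_mult \<sigma> d (skp_const a) g \<gamma> = a * g \<gamma>"
    by (simp add: const_mnm mnm_def mdeg_def)
qed

end

theorem lemma3p5:
  fixes \<sigma> :: "'a::division_ring \<Rightarrow> 'a" and d :: nat and f :: "(nat \<Rightarrow> nat) \<Rightarrow> 'a"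
  assumes "ring_aut \<sigma>"
    and "infinite (centre_fixed \<sigma>)"
    and "d \<ge> 1"
    and "f \<in> skpolys d"
    and "f \<noteq> skp_zero"
  shows "\<exists>a (as :: nat \<Rightarrow> 'a). (\<forall>i<d - 1. as i \<in> centre_fixed \<sigma>) \<and>
           (\<exists>\<phi>. skp_subst_hom \<sigma> d as \<phi> \<and>
                 monic_in_last d (skp_mult \<sigma> d (skp_const a) (\<phi> f)))"
proof -
  interpret skp \<sigma> d using assms(1) by unfold_locales
  let ?F = "centre_fixed \<sigma>"
  have Fc: "\<And>x. x \<in> ?F \<Longrightarrow> cen x \<and> \<sigma> x = x"
    by (auto simp: centre_fixed_def cen_def)
  have fs: "fsupp f" and fd: "\<And>\<alpha>. \<alpha> \<in> supp f \<Longrightarrow> dsup d \<alpha>"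
    using assms(4) by (auto simp: skpolys_iff)
  have ne: "supp f \<noteq> {}"
    using assms(5) by (auto simp: supp_def skp_zero_def fun_eq_iff)
  define m where "m = Max (mdeg d ` supp f)"
  have fin_img: "finite (mdeg d ` supp f)" using fs by (simp add: fsupp_def)
  have degf: "degb m f"
    unfolding degb_def m_def using fin_img by (auto simp: supp_def)
  have "m \<in> mdeg d ` supp f" using Max_in[OF fin_img] ne unfolding m_def by auto
  then obtain \<alpha>0 where \<alpha>0: "\<alpha>0 \<in> supp f" "mdeg d \<alpha>0 = m" by auto
  define S where "S = {\<alpha>\<in>supp f. mdeg d \<alpha> = m}"
  have inj: "\<forall>\<alpha>\<in>S. \<forall>\<beta>\<in>S. (\<forall>j<d - 1. \<alpha> j = \<beta> j) \<longrightarrow> \<alpha> = \<beta>"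
  proof (intro ballI impI)
    fix \<alpha> \<beta> assume ab: "\<alpha> \<in> S" "\<beta> \<in> S" "\<forall>j<d - 1. \<alpha> j = \<beta> j"
    have s: "(\<Sum>j<d - 1. \<alpha> j) = (\<Sum>j<d - 1. \<beta> j)" using ab(3) by simp
    have "\<alpha> (d - 1) = \<beta> (d - 1)"
      using ab mdeg_split[OF assms(3), of \<alpha>] mdeg_split[OF assms(3), of \<beta>] s by (simp add: S_def)
    moreover have "dsup d \<alpha>" "dsup d \<beta>" using ab fd by (auto simp: S_def)
    ultimately show "\<alpha> = \<beta>"
    proof (intro ext)
      fix j
      assume l: "\<alpha> (d - 1) = \<beta> (d - 1)" and da: "dsup d \<alpha>" "dsup d \<beta>"
      show "\<alpha> j = \<beta> j"
      proof (cases "j = d - 1")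
        case False
        show ?thesis
        proof (cases "j < d - 1")
          case True then show ?thesis using ab(3) by simp
        next
          case F2: False
          then have "d \<le> j" using False assms(3) by linarith
          then show ?thesis using da by (simp add: dsup_def)
        qed
      qed (use l in simp)
    qed
  qed
  have fS: "finite S" using fs by (simp add: S_def fsupp_def)
  have "\<alpha>0 \<in> S" using \<alpha>0 by (simp add: S_def)
  moreover have "f \<alpha>0 \<noteq> 0" using \<alpha>0 by (simp add: supp_def)
  ultimately obtain b where b: "\<forall>j. b j \<in> ?F" and Lnz: "(\<Sum>\<alpha>\<in>S. f \<alpha> * pw b \<alpha> (d - 1)) \<noteq> 0"
    using nz_multi[OF assms(2), of S "d - 1" \<alpha>0 f] Fc fS inj by blast
  have AS: "\<And>j. j < d - 1 \<Longrightarrow> cen (b j) \<and> \<sigma> (b j) = b j" using b Fc by blast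
  define \<phi> where "\<phi> = Phi b (d - 1)"
  define g where "g = \<phi> f"
  have gs: "g \<in> skpolys d" unfolding g_def \<phi>_def by (rule Phi_skpolys) (use assms in auto)
  have gfs: "fsupp g" and gd: "\<And>\<alpha>. \<alpha> \<in> supp g \<Longrightarrow> dsup d \<alpha>" using gs by (auto simp: skpolys_iff)
  have degg: "degb m g" unfolding g_def \<phi>_def by (rule Phi_degb) (use assms degf in auto)
  have Lg: "Lf (\<lambda>_. 0) m g = Lf b m f"
  proof -
    have "Lf (\<lambda>_. 0) m g = Lf (\<lambda>j. if j < d - 1 then b j else 0) m f"
      unfolding g_def \<phi>_def by (rule Lf_Phi) (use AS assms in auto)
    also have "\<dots> = Lf b m f"
      unfolding Lf_def lin_def by (intro sum.cong refl) (auto intro!: pw_cong)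
    finally show ?thesis .
  qed
  have Lf_f: "Lf b m f = (\<Sum>\<alpha>\<in>S. f \<alpha> * pw b \<alpha> (d - 1))"
    unfolding Lf_def lin_def S_def using fs by (simp only: sum.inter_filter fsupp_def)
  define \<gamma>s where "\<gamma>s = (\<lambda>j::nat. if j = d - 1 then m else 0)"
  have ds: "dsup d \<gamma>s" using assms(3) by (auto simp: dsup_def \<gamma>s_def)
  have char: "\<And>\<gamma>. dsup d \<gamma> \<Longrightarrow> (mdeg d \<gamma> = m \<and> (\<forall>j<d - 1. \<gamma> j = 0)) \<longleftrightarrow> \<gamma> = \<gamma>s"
  proof -
    fix \<gamma> :: "nat \<Rightarrow> nat" assume dg: "dsup d \<gamma>"
    show "(mdeg d \<gamma> = m \<and> (\<forall>j<d - 1. \<gamma> j = 0)) \<longleftrightarrow> \<gamma> = \<gamma>s"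
    proof
      assume h: "mdeg d \<gamma> = m \<and> (\<forall>j<d - 1. \<gamma> j = 0)"
      then have "(\<Sum>j<d - 1. \<gamma> j) = 0" by simp
      then have e: "mdeg d \<gamma> = \<gamma> (d - 1)" using mdeg_split[OF assms(3), of \<gamma>] by simp
      have "\<gamma> (d - 1) = m" using conjunct1[OF h] e by linarith
      show "\<gamma> = \<gamma>s"
      proof (rule ext)
        fix j
        show "\<gamma> j = \<gamma>s j"
        proof (cases "j = d - 1")
          case False
          show ?thesis
          proof (cases "j < d - 1")
            case True then show ?thesis using h False by (simp add: \<gamma>s_def)
          next
            case F2: False
            then have "d \<le> j" using False assms(3) by linarith
            then show ?thesis using dg False by (simp add: dsup_def \<gamma>s_def)
          qed
        qed (use \<open>\<gamma> (d - 1) = m\<close> in \<open>simp add: \<gamma>s_def\<close>)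
      qed
    next
      assume "\<gamma> = \<gamma>s"
      then show "mdeg d \<gamma> = m \<and> (\<forall>j<d - 1. \<gamma> j = 0)"
        using mdeg_split[OF assms(3), of \<gamma>s] by (simp add: \<gamma>s_def)
    qed
  qed
  have "Lf (\<lambda>_. 0) m g = (\<Sum>\<gamma>\<in>supp g. if \<gamma> = \<gamma>s then g \<gamma> else 0)"
    unfolding Lf_def lin_def
  proof (rule sum.cong[OF refl])
    fix \<gamma> assume "\<gamma> \<in> supp g"
    then have "dsup d \<gamma>" by (rule gd)
    from char[OF this] show "(if mdeg d \<gamma> = m then g \<gamma> * pw (\<lambda>_. 0) \<gamma> (d - 1) else 0) = (if \<gamma> = \<gamma>s then g \<gamma> else 0)"
      by (auto simp: pw_zero)
  qed
  also have "\<dots> = g \<gamma>s"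
    using gfs by (simp add: sum.delta fsupp_def supp_def)
  finally have g_top: "g \<gamma>s = (\<Sum>\<alpha>\<in>S. f \<alpha> * pw b \<alpha> (d - 1))" using Lg Lf_f by simp
  define \<Lambda> where "\<Lambda> = g \<gamma>s"
  have L0: "\<Lambda> \<noteq> 0" using Lnz g_top by (simp add: \<Lambda>_def)
  define a where "a = inverse \<Lambda>"
  have a0: "a \<noteq> 0" using L0 by (simp add: a_def)
  define h where "h = skp_mult \<sigma> d (skp_const a) g"
  have h_eq: "\<And>\<gamma>. h \<gamma> = a * g \<gamma>" by (simp add: h_def mult_const)
  have h_top: "h \<gamma>s = 1" using L0 by (simp add: h_eq a_def \<Lambda>_def)
  have hnz: "\<And>\<gamma>. h \<gamma> \<noteq> 0 \<Longrightarrow> dsup d \<gamma> \<and> mdeg d \<gamma> \<le> m"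
    using gd degg by (auto simp: h_eq degb_def supp_def)
  have dlast: "d - 1 < d" using assms(3) by simp
  have mg: "\<And>\<alpha>. h \<alpha> \<noteq> 0 \<Longrightarrow> \<alpha> (d - 1) \<le> m"
    using hnz mdeg_ge[OF dlast] order.trans by blast
  have deg_h: "deg_in h (d - 1) = m"
    unfolding deg_in_def
  proof (rule Max_eqI)
    show "finite {\<alpha> (d - 1) |\<alpha>. h \<alpha> \<noteq> 0}"
      by (rule finite_subset[of _ "{..m}"]) (use mg in auto)
    show "m \<in> {\<alpha> (d - 1) |\<alpha>. h \<alpha> \<noteq> 0}"
      using h_top by (auto simp: \<gamma>s_def intro!: exI[of _ \<gamma>s])
  qed (use mg in blast)
  have monic: "monic_in_last d h"
    unfolding monic_in_last_def deg_h
  proof (intro conjI allI impI)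
    show "h \<noteq> skp_zero" using h_top by (auto simp: skp_zero_def fun_eq_iff intro!: exI[of _ \<gamma>s])
    fix \<alpha> :: "nat \<Rightarrow> nat" assume am: "\<alpha> (d - 1) = m"
    show "h \<alpha> = (if \<forall>j. j \<noteq> d - 1 \<longrightarrow> \<alpha> j = 0 then 1 else 0)"
    proof (cases "\<forall>j. j \<noteq> d - 1 \<longrightarrow> \<alpha> j = 0")
      case True
      then have "\<alpha> = \<gamma>s" using am by (auto simp: \<gamma>s_def fun_eq_iff)
      then show ?thesis using True h_top by simp
    next
      case False
      then obtain j where j: "j \<noteq> d - 1" "\<alpha> j \<noteq> 0" by auto
      have "h \<alpha> = 0"
      proof (rule ccontr)
        assume "h \<alpha> \<noteq> 0"
        then have dm: "dsup d \<alpha>" "mdeg d \<alpha> \<le> m" using hnz by auto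
        then have "j < d" using j by (auto simp: dsup_def not_less[symmetric])
        then have "\<alpha> j + \<alpha> (d - 1) \<le> mdeg d \<alpha>" using mdeg_ge2[OF _ dlast j(1)] by blast
        then show False using dm am j by simp
      qed
      then show ?thesis using False by simp
    qed
  qed
  have hom: "skp_subst_hom \<sigma> d b \<phi>"
    unfolding skp_subst_hom_def
  proof (intro conjI ballI allI impI)
    fix p :: "(nat \<Rightarrow> nat) \<Rightarrow> 'a" assume "p \<in> skpolys d"
    then show "\<phi> p \<in> skpolys d" unfolding \<phi>_def by (rule Phi_skpolys[rotated]) simp
  next
    fix p q :: "(nat \<Rightarrow> nat) \<Rightarrow> 'a" assume "p \<in> skpolys d" "q \<in> skpolys d"
    then show "\<phi> (skp_add p q) = skp_add (\<phi> p) (\<phi> q)"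
      unfolding \<phi>_def add_eq by (intro Phi_add) auto
  next
    fix p q :: "(nat \<Rightarrow> nat) \<Rightarrow> 'a" assume "p \<in> skpolys d" "q \<in> skpolys d"
    then show "\<phi> (skp_mult \<sigma> d p q) = skp_mult \<sigma> d (\<phi> p) (\<phi> q)"
      unfolding \<phi>_def by (intro Phi_mult AS) auto
  next
    fix r :: 'a
    show "\<phi> (skp_const r) = skp_const r"
      unfolding \<phi>_def const_mnm by (rule Phi_fix) auto
  next
    fix i assume i: "i < d - 1"
    have "skp_mult \<sigma> d (skp_const (b i)) (skp_var (d - 1)) = mnm (b i) (ev (d - 1))"
      by (simp add: const_mnm var_mnm mult_mnm mdeg_def sig_one)
    then show "\<phi> (skp_var i) = skp_add (skp_var i) (skp_mult \<sigma> d (skp_const (b i)) (skp_var (d - 1)))"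
      unfolding \<phi>_def var_mnm add_eq using Phi_var[OF i, of "d - 1" b] i by (simp add: var_mnm)
  next
    show "\<phi> (skp_var (d - 1)) = skp_var (d - 1)"
      unfolding \<phi>_def var_mnm by (rule Phi_fix) (auto simp: ev_def)
  qed
  show ?thesis
    using hom monic b unfolding h_def g_def by blast
qed



end
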